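(* Let $G$ be a finite group with $d(G) \geq 2$, and let $1 \leq k \leq d(G)$. Assume that $G$ is $k$-flexible. Let $N$ be a normal subgroup of $G$ such that $d(G/N) = d(G)$. Then $G/N$ is $k$-flexible.
   Context: For a finite group $H$, $d(H)$ denotes the minimal size of a generating set of $H$. For an integer $1 \leq k \leq d(G)$, a finite group $G$ is called $k$-flexible if for any $x_1,\dots,x_k \in G$ with $d(\langle x_1,\dots,x_k\rangle)=k$ there exist $x_{k+1},\dots,x_{d(G)} \in G$ such that $\langle x_1,\dots,x_{d(G)}\rangle = G$. *)

theory Defs
  imports "HOL-Algebra.Algebra"
begin

definition min_gens :: "('a, 'b) monoid_scheme \<Rightarrow> 'a set \<Rightarrow> nat" where
  "min_gens G H = (LEAST n. \<exists>S. S \<subseteq> H \<and> finite S \<and> card S = n \<and> generate G S = H)"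

definition rank_grp :: "('a, 'b) monoid_scheme \<Rightarrow> nat" where
  "rank_grp G = min_gens G (carrier G)"

text \<open>k-flexible: for any x_1..x_k (indexed 0..k-1) in G with d(<x_1..x_k>) = k
  there are x_(k+1)..x_(d(G)) (indexed k..d(G)-1) with <x_1..x_d(G)> = G.\<close>
definition k_flexible :: "('a, 'b) monoid_scheme \<Rightarrow> nat \<Rightarrow> bool" where
  "k_flexible G k \<longleftrightarrow>
     (\<forall>x :: nat \<Rightarrow> 'a. x ` {..<k} \<subseteq> carrier G \<longrightarrow>
        min_gens G (generate G (x ` {..<k})) = k \<longrightarrow>
        (\<exists>y :: nat \<Rightarrow> 'a. y ` {k..<rank_grp G} \<subseteq> carrier G \<and>
           generate G (x ` {..<k} \<union> y ` {k..<rank_grp G}) = carrier G))"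

end

theory Submission
  imports Defs
begin

lemma min_gens_le:
  assumes "S \<subseteq> H" "finite S" "generate G S = H"
  shows "min_gens G H \<le> card S"
  unfolding min_gens_def by (rule Least_le) (use assms in blast)

lemma min_gens_ex:
  assumes "S \<subseteq> H" "finite S" "generate G S = H"
  shows "\<exists>T. T \<subseteq> H \<and> finite T \<and> card T = min_gens G H \<and> generate G T = H"
  unfolding min_gens_def by (rule LeastI_ex) (use assms in blast)

theorem lemma2p1:
  fixes G :: "('a, 'b) monoid_scheme" and N :: "'a set" and k :: nat
  assumes "group G"
    and "finite (carrier G)"
    and "rank_grp G \<ge> 2"
    and "1 \<le> k" and "k \<le> rank_grp G"
    and "k_flexible G k"
    and "N \<lhd> G"
    and "rank_grp (G Mod N) = rank_grp G"
  shows "k_flexible (G Mod N) k"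
  unfolding k_flexible_def
proof (intro allI impI)
  interpret G: group G by fact
  interpret N: normal N G by fact
  interpret Q: group "G Mod N" by (rule N.factorgroup_is_group)
  let ?h = "\<lambda>a. N #>\<^bsub>G\<^esub> a"
  interpret H: group_hom G "G Mod N" ?h
    by unfold_locales (rule N.r_coset_hom_Mod)
  fix xb :: "nat \<Rightarrow> 'a set"
  assume xb: "xb ` {..<k} \<subseteq> carrier (G Mod N)"
    and dk: "min_gens (G Mod N) (generate (G Mod N) (xb ` {..<k})) = k"
  define x where "x i = (SOME g. g \<in> carrier G \<and> xb i = N #>\<^bsub>G\<^esub> g)" for i
  have xi: "x i \<in> carrier G \<and> xb i = N #>\<^bsub>G\<^esub> x i" if "i < k" for i
  proof -
    have "xb i \<in> rcosets\<^bsub>G\<^esub> N" using xb that by (auto simp: FactGroup_def)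
    then obtain g where "g \<in> carrier G" "xb i = N #>\<^bsub>G\<^esub> g" by (auto simp: RCOSETS_def)
    then show ?thesis unfolding x_def by (metis (mono_tags, lifting) someI)
  qed
  have Xc: "x ` {..<k} \<subseteq> carrier G" using xi by auto
  have img: "xb ` {..<k} = ?h ` (x ` {..<k})" using xi by (force simp: image_iff)
  let ?X = "x ` {..<k}"
  have Xsub: "?X \<subseteq> generate G ?X" by (auto intro: generate.incl)
  have "min_gens G (generate G ?X) = k"
  proof (rule antisym)
    have "min_gens G (generate G ?X) \<le> card ?X"
      by (rule min_gens_le) (use Xsub in auto)
    also have "\<dots> \<le> k" using card_image_le[of "{..<k}" x] by simp
    finally show "min_gens G (generate G ?X) \<le> k" .
  next
    obtain T where T: "T \<subseteq> generate G ?X" "finite T" "card T = min_gens G (generate G ?X)"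
      "generate G T = generate G ?X"
      using min_gens_ex[OF Xsub, of G] by auto
    have TG: "T \<subseteq> carrier G" using T(1) G.generate_incl[OF Xc] by auto
    have "generate (G Mod N) (?h ` T) = ?h ` generate G T" by (rule H.generate_img[OF TG])
    also have "\<dots> = generate (G Mod N) (xb ` {..<k})"
      using T(4) H.generate_img[OF Xc] img by simp
    finally have e: "generate (G Mod N) (?h ` T) = generate (G Mod N) (xb ` {..<k})" .
    have "k \<le> card (?h ` T)"
      using min_gens_le[of "?h ` T" "generate (G Mod N) (xb ` {..<k})" "G Mod N"] e T(2) dk
        generate.incl[of _ "?h ` T" "G Mod N"] by auto
    also have "\<dots> \<le> card T" using card_image_le[OF T(2)] .
    finally show "k \<le> min_gens G (generate G ?X)" using T(3) by simp
  qed
  then obtain y where y: "y ` {k..<rank_grp G} \<subseteq> carrier G"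
    "generate G (?X \<union> y ` {k..<rank_grp G}) = carrier G"
    using assms(6) Xc unfolding k_flexible_def by blast
  let ?Y = "y ` {k..<rank_grp G}"
  have "generate (G Mod N) (?h ` (?X \<union> ?Y)) = ?h ` carrier G"
    using H.generate_img[of "?X \<union> ?Y"] Xc y by simp
  also have "\<dots> = carrier (G Mod N)"
    by (auto simp: FactGroup_def RCOSETS_def)
  finally have "generate (G Mod N) (xb ` {..<k} \<union> (?h \<circ> y) ` {k..<rank_grp (G Mod N)}) = carrier (G Mod N)"
    using img assms(8) by (simp add: image_Un image_comp)
  moreover have "(?h \<circ> y) ` {k..<rank_grp (G Mod N)} \<subseteq> carrier (G Mod N)"
    using y(1) assms(8) by (auto simp: FactGroup_def RCOSETS_def)
  ultimately show "\<exists>y. y ` {k..<rank_grp (G Mod N)} \<subseteq> carrier (G Mod N) \<and>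
           generate (G Mod N) (xb ` {..<k} \<union> y ` {k..<rank_grp (G Mod N)}) = carrier (G Mod N)"
    by blast
qed

end
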